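(* Under the standing setup, assume that $f$ is bounded, i.e. $\sup_{q\in\mathcal P}\|f_q\|_\infty<\infty$. Then for all $t\ge0$ and $u_0\in\mathbb R^d$, $\|\mathscr S(t)u_0-u_0\|_\infty\le t\sup_{q\in\mathcal P}\|qu_0+f_q\|_\infty,$ and for all $s,t\ge0$, $\|\mathscr S(t)u_0-\mathscr S(s)u_0\|_\infty\le|t-s|\sup_{q\in\mathcal P}\|qu_0+f_q\|_\infty$. In particular $t\mapsto\mathscr S(t)u_0$ is Lipschitz continuous.
   Context: Standing setup: $d\in\mathbb N$; vectors in $\mathbb R^d$ with $\|u\|_\infty=\max_i|u_i|$; inequalities and suprema of vectors are componentwise; reals are identified with constant vectors. A $Q$-matrix is $q\in\mathbb R^{d\times d}$ with $q_{ii}\le0$, $q_{ij}\ge0$ ($i\ne j$), $\sum_jq_{ij}=0$. Let $\mathcal P$ be a set of $Q$-matrices and $f=(f_q)_{q\in\mathcal P}\subset\mathbb R^d$ with $\sup_{q\in\mathcal P}f_q=f_{q_0}=0$ for some $q_0\in\mathcal P$, such that $\mathcal Qu:=\sup_{q\in\mathcal P}(qu+f_q)$ is finite for every $u\in\mathbb R^d$. For $q\in\mathcal P$, $t\ge0$: $S_q(t)u_0:=e^{tq}u_0+\int_0^te^{sq}f_q\,ds$. For $h\ge0$: $\mathcal E_hu_0:=\sup_{q\in\mathcal P}S_q(h)u_0$. $P$ is the set of finite subsets $\pi\subset[0,\infty)$ with $0\in\pi$; $P_t:=\{\pi\in P:\max\pi=t\}$. For $\pi=\{t_0,\dots,t_m\}$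 with $0=t_0<\dots<t_m$, $m\ge1$, $\mathcal E_\pi:=\mathcal E_{t_1-t_0}\circ\cdots\circ\mathcal E_{t_m-t_{m-1}}$, and $\mathcal E_{\{0\}}:=\mathcal E_0$. The Nisio semigroup of $(\mathcal P,f)$ is $\mathscr S(t)u_0:=\sup_{\pi\in P_t}\mathcal E_\pi u_0$ for $t\ge0$, $u_0\in\mathbb R^d$. *)

theory Defs
  imports "HOL-Analysis.Analysis"
begin

definition is_Q_matrix :: "real^'n^'n \<Rightarrow> bool" where
  "is_Q_matrix q \<longleftrightarrow> (\<forall>i. q$i$i \<le> 0) \<and> (\<forall>i j. i \<noteq> j \<longrightarrow> q$i$j \<ge> 0)
      \<and> (\<forall>i. (\<Sum>j\<in>UNIV. q$i$j) = 0)"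

definition mpow :: "real^'n^'n \<Rightarrow> nat \<Rightarrow> real^'n^'n" where
  "mpow A k = (((**) A) ^^ k) (mat 1)"

definition mexp :: "real^'n^'n \<Rightarrow> real^'n^'n" where
  "mexp A = (\<Sum>k. (1 / (fact k :: real)) *\<^sub>R mpow A k)"

definition supnorm :: "real^'n \<Rightarrow> real" where
  "supnorm u = Max (range (\<lambda>i. \<bar>u$i\<bar>))"

definition Ssol :: "real^'n^'n \<Rightarrow> real^'n \<Rightarrow> real \<Rightarrow> real^'n \<Rightarrow> real^'n" where
  "Ssol q fq t u0 = mexp (t *\<^sub>R q) *v u0 + integral {0..t} (\<lambda>s. mexp (s *\<^sub>R q) *v fq)"

definition Eop :: "(real^'n^'n) set \<Rightarrow> (real^'n^'n \<Rightarrow> real^'n) \<Rightarrow> real \<Rightarrow> real^'n \<Rightarrow> real^'n" where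
  "Eop P f h u0 = (\<chi> i. SUP q\<in>P. (Ssol q (f q) h u0) $ i)"

definition partitions :: "real \<Rightarrow> real set set" where
  "partitions t = {\<pi>. finite \<pi> \<and> \<pi> \<subseteq> {0..} \<and> 0 \<in> \<pi> \<and> Max \<pi> = t}"

definition increments :: "real set \<Rightarrow> real list" where
  "increments \<pi> = (let xs = sorted_list_of_set \<pi> in map (\<lambda>(a,b). b - a) (zip xs (tl xs)))"

definition Epart :: "(real^'n^'n) set \<Rightarrow> (real^'n^'n \<Rightarrow> real^'n) \<Rightarrow> real set \<Rightarrow> real^'n \<Rightarrow> real^'n" where
  "Epart P f \<pi> u0 = (if increments \<pi> = [] then Eop P f 0 u0
                      else foldr (Eop P f) (increments \<pi>) u0)"

definition nisio :: "(real^'n^'n) set \<Rightarrow> (real^'n^'n \<Rightarrow> real^'n) \<Rightarrow> real \<Rightarrow> real^'n \<Rightarrow> real^'n" where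
  "nisio P f t u0 = (\<chi> i. SUP \<pi>\<in>partitions t. (Epart P f \<pi> u0) $ i)"

end

theory Submission
  imports Defs
begin

typedef (overloaded) ('n::finite) sqm = "UNIV :: ((real^'n) \<Rightarrow>\<^sub>L (real^'n)) set"
  morphisms bl Sq by auto

setup_lifting type_definition_sqm

instantiation sqm :: (finite) real_normed_vector
begin
lift_definition norm_sqm :: "'a sqm \<Rightarrow> real" is norm .
lift_definition minus_sqm :: "'a sqm \<Rightarrow> 'a sqm \<Rightarrow> 'a sqm" is "(-)" .
lift_definition plus_sqm :: "'a sqm \<Rightarrow> 'a sqm \<Rightarrow> 'a sqm" is "(+)" .
lift_definition uminus_sqm :: "'a sqm \<Rightarrow> 'a sqm" is "uminus" .
lift_definition zero_sqm :: "'a sqm" is "0" .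
lift_definition scaleR_sqm :: "real \<Rightarrow> 'a sqm \<Rightarrow> 'a sqm" is "scaleR" .
definition dist_sqm :: "'a sqm \<Rightarrow> 'a sqm \<Rightarrow> real" where "dist_sqm a b = norm (a - b)"
definition uniformity_sqm :: "('a sqm \<times> 'a sqm) filter" where
  "uniformity_sqm = (INF e\<in>{0 <..}. principal {(x, y). dist x y < e})"
definition open_sqm :: "'a sqm set \<Rightarrow> bool"
  where "open_sqm S = (\<forall>x\<in>S. \<forall>\<^sub>F (x', y) in uniformity. x' = x \<longrightarrow> y \<in> S)"
definition sgn_sqm :: "'a sqm \<Rightarrow> 'a sqm"
  where "sgn_sqm x = scaleR (inverse (norm x)) x"
instance
  apply standard
  unfolding dist_sqm_def open_sqm_def sgn_sqm_def uniformity_sqm_def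
  apply (rule refl | (transfer, force simp: norm_triangle_ineq algebra_simps))+
  done
end

lemma norm_bl: "norm (bl x) = norm x" by transfer simp
lemma bl_diff: "bl (x - y) = bl x - bl y" by transfer simp

instance sqm :: (finite) banach
proof
  fix X :: "nat \<Rightarrow> 'a sqm"
  assume "Cauchy X"
  hence "Cauchy (\<lambda>n. bl (X n))"
    unfolding Cauchy_def dist_norm by (simp add: bl_diff[symmetric] norm_bl)
  then obtain L where L: "(\<lambda>n. bl (X n)) \<longlonglongrightarrow> L" using Cauchy_convergent_iff convergent_def by blast
  have "X \<longlonglongrightarrow> Sq L"
    using L unfolding tendsto_iff dist_norm
    by (simp add: norm_bl[symmetric] bl_diff Sq_inverse)
  thus "convergent X" by (auto simp: convergent_def)
qed

instantiation sqm :: (finite) real_normed_algebra_1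
begin
lift_definition times_sqm :: "'a sqm \<Rightarrow> 'a sqm \<Rightarrow> 'a sqm" is "blinfun_compose" .
lift_definition one_sqm :: "'a sqm" is "id_blinfun" .
instance
proof
  show "(0::'a sqm) \<noteq> 1"
  proof transfer
    have "blinfun_apply (id_blinfun :: (real^'a) \<Rightarrow>\<^sub>L (real^'a)) (axis undefined 1) \<noteq> 0"
      by (simp add: axis_eq_0_iff)
    thus "(0 :: (real^'a) \<Rightarrow>\<^sub>L (real^'a)) \<noteq> id_blinfun" by (metis blinfun.zero_left)
  qed
qed (transfer; auto intro!: blinfun_eqI simp: blinfun.bilinear_simps norm_blinfun_compose)+
end

definition app :: "'n::finite sqm \<Rightarrow> real^'n \<Rightarrow> real^'n" where
  "app M u = blinfun_apply (bl M) u"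

lemma app_mult: "app (M * N) u = app M (app N u)" unfolding app_def by transfer simp
lemma app_one[simp]: "app 1 u = u" unfolding app_def by transfer simp
lemma app_add: "app (M + N) u = app M u + app N u" unfolding app_def by transfer (simp add: blinfun.bilinear_simps)
lemma app_scaleR: "app (c *\<^sub>R M) u = c *\<^sub>R app M u" unfolding app_def by transfer (simp add: blinfun.bilinear_simps)
lemma app_linear_right: "app M (u + v) = app M u + app M v" "app M (c *\<^sub>R u) = c *\<^sub>R app M u"
  "app M (u - v) = app M u - app M v"
  unfolding app_def by (simp_all add: blinfun.bilinear_simps)
lemma norm_app: "norm (app M u) \<le> norm M * norm u" unfolding app_def
  by (metis norm_bl norm_blinfun)

lemma bounded_linear_app_left: "bounded_linear (\<lambda>M. app M u)"
proof
  show "app (M + N) u = app M u + app N u" for M N by (rule app_add)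
  show "app (c *\<^sub>R M) u = c *\<^sub>R app M u" for c M by (rule app_scaleR)
  show "\<exists>K. \<forall>M. norm (app M u) \<le> norm M * K"
    by (rule exI[of _ "norm u"]) (simp add: norm_app)
qed


definition Mx :: "real^'n^'n \<Rightarrow> 'n::finite sqm" where
  "Mx A = Sq (Blinfun (\<lambda>x. A *v x))"

lemma app_Mx[simp]: "app (Mx A) u = A *v u"
  unfolding app_def Mx_def by (simp add: Sq_inverse bounded_linear_Blinfun_apply)

lemma sqm_eqI: "(\<And>u. app M u = app N u) \<Longrightarrow> M = N"
  unfolding app_def by (metis blinfun_eqI bl_inject)

lemma Mx_mult: "Mx (A ** B) = Mx A * Mx B"
  by (rule sqm_eqI) (simp add: app_mult matrix_vector_mul_assoc)
lemma Mx_one: "Mx (mat 1) = 1"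
  by (rule sqm_eqI) simp
lemma Mx_add: "Mx (A + B) = Mx A + Mx B"
  by (rule sqm_eqI) (simp add: app_add matrix_vector_mult_add_rdistrib)
lemma Mx_scaleR: "Mx (c *\<^sub>R A) = c *\<^sub>R Mx A"
  by (rule sqm_eqI) (simp add: app_scaleR scaleR_matrix_vector_assoc)

lemma Mx_mpow: "Mx (mpow A k) = Mx A ^ k"
  by (induction k) (simp_all add: mpow_def Mx_one Mx_mult)

definition Xm :: "'n::finite sqm \<Rightarrow> real^'n^'n" where
  "Xm M = matrix (app M)"

lemma bounded_linear_app: "bounded_linear (app M)"
  unfolding app_def by (rule blinfun.bounded_linear_right)

lemma Xm_app[simp]: "Xm M *v u = app M u"
  unfolding Xm_def using matrix_vector_mul(3)[OF bounded_linear_app] by metis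

lemma Xm_Mx[simp]: "Xm (Mx A) = A"
  unfolding Xm_def by (simp add: fun_eq_iff[symmetric] matrix_of_matrix_vector_mul[of A, unfolded app_Mx[symmetric]])

lemma norm_vec_le_sum: "norm (x::('a::real_normed_vector)^'n) \<le> (\<Sum>i\<in>UNIV. norm (x$i))"
  by (simp add: norm_vec_def L2_set_le_sum)

lemma bounded_linear_Xm: "bounded_linear (Xm :: 'n::finite sqm \<Rightarrow> _)"
proof
  fix M N :: "'n sqm" and c :: real
  show "Xm (M + N) = Xm M + Xm N" unfolding Xm_def
    by (simp add: matrix_def vec_eq_iff app_add)
  show "Xm (c *\<^sub>R M) = c *\<^sub>R Xm M" unfolding Xm_def
    by (simp add: matrix_def vec_eq_iff app_scaleR)
  show "\<exists>K. \<forall>M::'n sqm. norm (Xm M) \<le> norm M * K"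
  proof (intro exI allI)
    fix M :: "'n sqm"
    have "norm (Xm M) \<le> (\<Sum>i\<in>UNIV. norm (Xm M $ i))" by (rule norm_vec_le_sum)
    also have "\<dots> \<le> (\<Sum>i\<in>(UNIV::'n set). \<Sum>j\<in>(UNIV::'n set). norm M)"
    proof (rule sum_mono)
      fix i
      have "norm (Xm M $ i) \<le> (\<Sum>j\<in>UNIV. \<bar>Xm M $ i $ j\<bar>)" by (rule norm_le_l1_cart)
      also have "\<dots> \<le> (\<Sum>j\<in>(UNIV::'n set). norm M)"
      proof (rule sum_mono)
        fix j
        have "\<bar>Xm M $ i $ j\<bar> = \<bar>app M (axis j 1) $ i\<bar>" unfolding Xm_def matrix_def by simp
        also have "\<dots> \<le> norm (app M (axis j 1))" by (rule component_le_norm_cart)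
        also have "\<dots> \<le> norm M * norm (axis j (1::real))" by (rule norm_app)
        finally show "\<bar>Xm M $ i $ j\<bar> \<le> norm M" by simp
      qed
      finally show "norm (Xm M $ i) \<le> (\<Sum>j\<in>(UNIV::'n set). norm M)" .
    qed
    also have "\<dots> = norm M * (real CARD('n) * real CARD('n))" by simp
    finally show "norm (Xm M) \<le> norm M * (real CARD('n) * real CARD('n))" .
  qed
qed

lemma mexp_sums: "(\<lambda>k. (1 / fact k) *\<^sub>R mpow A k) sums Xm (exp (Mx A))"
proof -
  have "(\<lambda>n. (Mx A)^n /\<^sub>R fact n) sums exp (Mx A)"
    unfolding exp_def by (rule summable_sums[OF summable_exp_generic])
  from bounded_linear.sums[OF bounded_linear_Xm this]
  have "(\<lambda>n. Xm ((Mx A)^n /\<^sub>R fact n)) sums Xm (exp (Mx A))" .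
  moreover have "Xm ((Mx A)^n /\<^sub>R fact n) = (1 / fact n) *\<^sub>R mpow A n" for n
    by (metis Mx_mpow Mx_scaleR Xm_Mx divide_inverse_commute divide_real_def mult_1)
  ultimately show ?thesis by simp
qed

lemma mexp_app: "mexp A *v u = app (exp (Mx A)) u"
  unfolding mexp_def using mexp_sums[of A] sums_unique by (metis Xm_app)


definition Et :: "real^'n^'n \<Rightarrow> real \<Rightarrow> 'n::finite sqm" where
  "Et q t = exp (t *\<^sub>R Mx q)"

lemma mexp_Et: "mexp (t *\<^sub>R q) *v u = app (Et q t) u"
  unfolding Et_def mexp_app Mx_scaleR ..

lemma Ssol_Et: "Ssol q fq t u = app (Et q t) u + integral {0..t} (\<lambda>s. app (Et q s) fq)"
  unfolding Ssol_def mexp_Et ..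

lemma app_zero: "app M 0 = 0" unfolding app_def by simp

lemma app_of_real: "app (of_real c) u = c *\<^sub>R u"
  unfolding of_real_def by (simp add: app_scaleR)

lemma mpow_nonneg:
  assumes "\<forall>i j. 0 \<le> A $ i $ j" "\<forall>i. 0 \<le> u $ i"
  shows "0 \<le> (mpow A n *v u) $ i"
  using assms(2)
proof (induction n arbitrary: i)
  case 0 then show ?case by (simp add: mpow_def)
next
  case (Suc n)
  have "mpow A (Suc n) *v u = A *v (mpow A n *v u)"
    by (simp add: mpow_def matrix_vector_mul_assoc)
  moreover have "0 \<le> (A *v v) $ i" if "\<forall>j. 0 \<le> v $ j" for v
    unfolding matrix_vector_mult_def using that assms(1)
    by (auto intro!: sum_nonneg)
  hence "0 \<le> (A *v (mpow A n *v u)) $ i" using Suc by blast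
  ultimately show ?case by simp
qed

lemma exp_nonneg_app:
  assumes "\<forall>i j. 0 \<le> A $ i $ j" "\<forall>i. 0 \<le> u $ i" "0 \<le> t"
  shows "0 \<le> app (exp (t *\<^sub>R Mx A)) u $ i"
proof -
  let ?X = "t *\<^sub>R Mx A"
  have bl: "bounded_linear (\<lambda>M. app M u $ i)"
    using bounded_linear_compose[OF bounded_linear_vec_nth bounded_linear_app_left] .
  have sm: "summable (\<lambda>n. ?X^n /\<^sub>R fact n)" by (rule summable_exp_generic)
  have "app (exp ?X) u $ i = (\<Sum>n. app (?X^n /\<^sub>R fact n) u $ i)"
    unfolding exp_def using bounded_linear.suminf[OF bl sm] by simp
  also have "\<dots> \<ge> 0"
  proof (rule suminf_nonneg)
    show "summable (\<lambda>n. app (?X^n /\<^sub>R fact n) u $ i)"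
      using bounded_linear.summable[OF bl sm] .
    fix n
    have "app (?X^n /\<^sub>R fact n) u $ i = (t^n / fact n) * (mpow A n *v u) $ i"
      by (simp add: Mx_mpow[symmetric] app_scaleR divide_inverse mult_ac)
    also have "\<dots> \<ge> 0" using mpow_nonneg[OF assms(1,2)] assms(3) by simp
    finally show "0 \<le> app (?X^n /\<^sub>R fact n) u $ i" .
  qed
  finally show ?thesis .
qed

lemma Et_nonneg:
  assumes Q: "is_Q_matrix q" and u: "\<forall>i. 0 \<le> u $ i" and t: "0 \<le> t"
  shows "0 \<le> app (Et q t) u $ i"
proof -
  define lam where "lam = (\<Sum>i\<in>UNIV. \<bar>q$i$i\<bar>)"
  define A where "A = q + lam *\<^sub>R mat 1"
  have Anonneg: "\<forall>i j. 0 \<le> A $ i $ j"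
  proof (intro allI)
    fix i j
    show "0 \<le> A $ i $ j"
    proof (cases "i = j")
      case True
      have "\<bar>q$i$i\<bar> \<le> lam" unfolding lam_def
        by (rule member_le_sum) auto
      then show ?thesis using True by (simp add: A_def mat_def)
    next
      case False
      then show ?thesis using Q lam_def
        by (simp add: A_def mat_def is_Q_matrix_def sum_nonneg)
    qed
  qed
  have q: "Mx q = Mx A + of_real (- lam)"
    unfolding A_def Mx_add Mx_scaleR Mx_one by (simp add: of_real_def)
  have eq: "t *\<^sub>R Mx q = t *\<^sub>R Mx A + of_real (- (t * lam))"
    unfolding q by (simp add: of_real_def algebra_simps)
  have "Et q t = exp (t *\<^sub>R Mx A) * of_real (exp (- (t*lam)))"
    unfolding Et_def eq exp_of_real[symmetric] by (rule exp_add_commuting) (simp add: of_real_def)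
  hence "app (Et q t) u $ i = exp (- (t*lam)) * app (exp (t *\<^sub>R Mx A)) u $ i"
    by (simp add: app_mult app_of_real app_linear_right)
  also have "\<dots> \<ge> 0" using exp_nonneg_app[OF Anonneg u t] by simp
  finally show ?thesis .
qed

lemma Et_deriv:
  "((\<lambda>t. app (Et q t) u) has_vector_derivative app (Et q t) (q *v u)) (at t within T)"
proof -
  have "((\<lambda>t. Et q t) has_vector_derivative Et q t * Mx q) (at t within T)"
    unfolding Et_def by (rule exp_scaleR_has_vector_derivative_right)
  from bounded_linear.has_vector_derivative[OF bounded_linear_app_left this]
  show ?thesis by (simp add: app_mult)
qed

lemma Et_one:
  assumes Q: "is_Q_matrix q"
  shows "app (Et q t) 1 = 1"
proof -
  have q1: "q *v 1 = 0" using Q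
    by (simp add: is_Q_matrix_def matrix_vector_mult_def vec_eq_iff)
  have "\<And>s. ((\<lambda>t. app (Et q t) 1) has_derivative (\<lambda>h. 0)) (at s within UNIV)"
    using Et_deriv[of q 1] unfolding has_vector_derivative_def q1 by (simp add: app_zero)
  hence "\<exists>c. \<forall>x\<in>UNIV. app (Et q x) 1 = c"
    by (intro has_derivative_zero_constant) auto
  hence "app (Et q t) 1 = app (Et q 0) 1" by auto
  thus ?thesis by (simp add: Et_def)
qed

lemma Et_bound:
  assumes Q: "is_Q_matrix q" and t: "0 \<le> t" and B: "\<forall>j. \<bar>w $ j\<bar> \<le> B"
  shows "\<bar>app (Et q t) w $ i\<bar> \<le> B"
proof -
  have 1: "0 \<le> app (Et q t) (B *\<^sub>R 1 - w) $ i"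
    by (rule Et_nonneg[OF Q _ t]) (use B in \<open>auto simp: abs_le_iff\<close>)
  have "\<forall>i. 0 \<le> (B *\<^sub>R 1 + w) $ i"
  proof
    fix i
    from B have "\<bar>w$i\<bar> \<le> B" by simp
    thus "0 \<le> (B *\<^sub>R 1 + w) $ i" by simp
  qed
  have 2: "0 \<le> app (Et q t) (B *\<^sub>R 1 + w) $ i"
    by (rule Et_nonneg[OF Q _ t]) fact
  show ?thesis using 1 2 by (simp add: app_linear_right Et_one[OF Q] abs_le_iff)
qed


lemma Ssol_0: "Ssol q fq 0 u = u"
  unfolding Ssol_Et by (simp add: Et_def)

lemma Ssol_nonexp:
  assumes Q: "is_Q_matrix q" and h: "0 \<le> h" and B: "\<forall>j. \<bar>(u - v) $ j\<bar> \<le> B"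
  shows "\<bar>(Ssol q fq h u - Ssol q fq h v) $ i\<bar> \<le> B"
proof -
  have "Ssol q fq h u - Ssol q fq h v = app (Et q h) (u - v)"
    unfolding Ssol_Et by (simp add: app_linear_right)
  thus ?thesis using Et_bound[OF Q h B] by simp
qed

lemma Ssol_diff_le:
  assumes Q: "is_Q_matrix q" and b: "0 \<le> b" "b \<le> a" and B: "\<forall>j. \<bar>(q *v u + fq) $ j\<bar> \<le> B"
  shows "\<bar>(Ssol q fq a u - Ssol q fq b u) $ i\<bar> \<le> (a - b) * B"
proof -
  define g where "g r = app (Et q r) u" for r
  define h where "h r = app (Et q r) fq" for r
  have gd: "\<And>r. (g has_vector_derivative app (Et q r) (q *v u)) (at r within {b..a})"
    unfolding g_def by (rule Et_deriv)
  have ftc: "((\<lambda>r. app (Et q r) (q *v u)) has_integral (g a - g b)) {b..a}"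
    by (rule fundamental_theorem_of_calculus[OF b(2)]) (use gd in auto)
  have hc: "continuous_on {0..a} h"
    unfolding h_def
    by (intro continuous_at_imp_continuous_on ballI has_vector_derivative_continuous[OF Et_deriv])
  hence hi: "h integrable_on {0..a}" by (rule integrable_continuous_interval)
  have comb: "integral {0..b} h + integral {b..a} h = integral {0..a} h"
    by (rule Henstock_Kurzweil_Integration.integral_combine[OF b hi])
  have hi2: "h integrable_on {b..a}"
    using hi by (rule integrable_subinterval_real) (use b in auto)
  have "((\<lambda>r. app (Et q r) (q *v u) + h r) has_integral (g a - g b + integral {b..a} h)) {b..a}"
    by (rule has_integral_add[OF ftc integrable_integral[OF hi2]])
  moreover have "(\<lambda>r. app (Et q r) (q *v u) + h r) = (\<lambda>r. app (Et q r) (q *v u + fq))"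
    by (simp add: h_def app_linear_right)
  moreover have "Ssol q fq a u - Ssol q fq b u = g a - g b + integral {b..a} h"
    unfolding Ssol_Et g_def h_def[symmetric] using comb by (simp add: algebra_simps)
  ultimately have I: "((\<lambda>r. app (Et q r) (q *v u + fq)) has_integral (Ssol q fq a u - Ssol q fq b u)) {b..a}"
    by simp
  have Ii: "((\<lambda>r. app (Et q r) (q *v u + fq) $ i) has_integral (Ssol q fq a u - Ssol q fq b u) $ i) (cbox b a)"
    using has_integral_linear[OF I bounded_linear_vec_nth[of i]] by (simp add: o_def)
  have B0: "0 \<le> B" using B by (meson abs_ge_zero order_trans)
  have "norm ((Ssol q fq a u - Ssol q fq b u) $ i) \<le> B * measure lborel (cbox b a)"
  proof (rule has_integral_bound[OF B0 Ii])
    fix x assume "x \<in> cbox b a"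
    hence "0 \<le> x" using b by auto
    thus "norm (app (Et q x) (q *v u + fq) $ i) \<le> B"
      using Et_bound[OF Q _ B] by simp
  qed
  thus ?thesis using b by (simp add: mult.commute)
qed

lemma Ssol_diff_abs:
  assumes Q: "is_Q_matrix q" and ab: "0 \<le> a" "0 \<le> b" and B: "\<forall>j. \<bar>(q *v u + fq) $ j\<bar> \<le> B"
  shows "\<bar>(Ssol q fq a u - Ssol q fq b u) $ i\<bar> \<le> \<bar>a - b\<bar> * B"
proof (cases "b \<le> a")
  case True then show ?thesis using Ssol_diff_le[OF Q ab(2) True B] by simp
next
  case False
  then have "\<bar>(Ssol q fq b u - Ssol q fq a u) $ i\<bar> \<le> (b - a) * B"
    using Ssol_diff_le[OF Q ab(1) _ B] by simp
  then show ?thesis using False by (simp add: abs_minus_commute)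
qed


lemma supnorm_ge: "\<bar>x $ i\<bar> \<le> supnorm x"
  unfolding supnorm_def by (rule Max_ge) auto

lemma supnorm_le: "(\<And>i. \<bar>x $ i\<bar> \<le> B) \<Longrightarrow> supnorm x \<le> B"
  unfolding supnorm_def by (subst Max_le_iff) auto

lemma supnorm_nonneg: "0 \<le> supnorm x"
  using supnorm_ge[of x undefined] by linarith

lemma SUP_cmp:
  fixes F G :: "'a \<Rightarrow> real"
  assumes "A \<noteq> {}" "bdd_above (G ` B)" "\<forall>x\<in>A. \<exists>y\<in>B. F x \<le> G y + c"
  shows "(SUP x\<in>A. F x) \<le> (SUP y\<in>B. G y) + c"
proof (rule cSUP_least[OF assms(1)])
  fix x assume "x \<in> A"
  then obtain y where y: "y \<in> B" "F x \<le> G y + c" using assms(3) by blast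
  have "G y \<le> (SUP y\<in>B. G y)" by (rule cSUP_upper[OF y(1) assms(2)])
  thus "F x \<le> (SUP y\<in>B. G y) + c" using y by linarith
qed

lemma SUP_abs_cmp:
  fixes F G :: "'a \<Rightarrow> real"
  assumes "A \<noteq> {}" "B \<noteq> {}" "bdd_above (F ` A)" "bdd_above (G ` B)"
    "\<forall>x\<in>A. \<exists>y\<in>B. \<bar>F x - G y\<bar> \<le> c" "\<forall>y\<in>B. \<exists>x\<in>A. \<bar>F x - G y\<bar> \<le> c"
  shows "\<bar>(SUP x\<in>A. F x) - (SUP y\<in>B. G y)\<bar> \<le> c"
proof -
  have "(SUP x\<in>A. F x) \<le> (SUP y\<in>B. G y) + c"
  proof (rule SUP_cmp[OF assms(1,4)], intro ballI)
    fix x assume "x \<in> A"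
    then obtain y where "y \<in> B" "\<bar>F x - G y\<bar> \<le> c" using assms(5) by blast
    thus "\<exists>y\<in>B. F x \<le> G y + c" by (intro bexI[of _ y]) auto
  qed
  moreover have "(SUP y\<in>B. G y) \<le> (SUP x\<in>A. F x) + c"
  proof (rule SUP_cmp[OF assms(2,3)], intro ballI)
    fix y assume "y \<in> B"
    then obtain x where "x \<in> A" "\<bar>F x - G y\<bar> \<le> c" using assms(6) by blast
    thus "\<exists>x\<in>A. G y \<le> F x + c" by (intro bexI[of _ x]) auto
  qed
  ultimately show ?thesis by linarith
qed

lemma SUP_const_cmp:
  fixes F :: "'a \<Rightarrow> real"
  assumes "A \<noteq> {}" "\<forall>x\<in>A. \<bar>F x - a\<bar> \<le> c"
  shows "\<bar>(SUP x\<in>A. F x) - a\<bar> \<le> c"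
proof -
  have bdd: "bdd_above (F ` A)" using assms(2) by (intro bdd_aboveI[of _ "a + c"]) force
  have "(SUP x\<in>A. F x) \<le> a + c"
    by (rule cSUP_least[OF assms(1)]) (use assms(2) in force)
  moreover obtain x where "x \<in> A" using assms(1) by blast
  moreover have "F x \<le> (SUP x\<in>A. F x)" by (rule cSUP_upper[OF \<open>x \<in> A\<close> bdd])
  ultimately show ?thesis using assms(2) by force
qed

lemma mv_axis: "(q *v axis j 1) $ i = (q $ i $ j :: real)"
  by (simp add: matrix_vector_mult_def axis_def if_distrib cong: if_cong)

lemma Qmv_eq:
  assumes "is_Q_matrix q"
  shows "(q *v u) $ i = (\<Sum>j\<in>UNIV. q $ i $ j * (u $ j - u $ i))"
proof -
  have "(\<Sum>j\<in>UNIV. q $ i $ j * (u $ j - u $ i)) = (\<Sum>j\<in>UNIV. q $ i $ j * u $ j) - (\<Sum>j\<in>UNIV. q $ i $ j) * u $ i"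
    by (simp add: algebra_simps sum_subtractf sum_distrib_left)
  thus ?thesis using assms by (simp add: is_Q_matrix_def matrix_vector_mult_def)
qed

context
  fixes P :: "(real^'n::finite^'n) set" and f :: "real^'n^'n \<Rightarrow> real^'n" and q0
  assumes Q: "\<forall>q\<in>P. is_Q_matrix q"
    and q0: "q0 \<in> P"
    and Qfin: "\<forall>u i. bdd_above ((\<lambda>q. (q *v u + f q) $ i) ` P)"
    and fbdd: "bdd_above ((\<lambda>q. supnorm (f q)) ` P)"
begin

lemma entry_bound: "\<exists>bnd. \<forall>q\<in>P. \<forall>i j. q $ i $ j \<le> bnd i j"
proof -
  obtain Fb where Fb: "\<forall>q\<in>P. supnorm (f q) \<le> Fb" using fbdd unfolding bdd_above_def by blast
  have "\<forall>i j. \<exists>b. \<forall>q\<in>P. q $ i $ j \<le> b"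
  proof (intro allI)
    fix i j
    have "bdd_above ((\<lambda>q. (q *v axis j (1::real) + f q) $ i) ` P)" by (rule Qfin[rule_format])
    then obtain b where b: "\<forall>q\<in>P. (q *v axis j 1 + f q) $ i \<le> b"
      unfolding bdd_above_def by blast
    have "\<forall>q\<in>P. q $ i $ j \<le> b + Fb"
    proof
      fix q assume q: "q \<in> P"
      have "\<bar>f q $ i\<bar> \<le> supnorm (f q)" by (rule supnorm_ge)
      also have "\<dots> \<le> Fb" using Fb q by blast
      finally have "\<bar>f q $ i\<bar> \<le> Fb" .
      moreover have "(q *v axis j 1 + f q) $ i \<le> b" using b q by blast
      ultimately show "q $ i $ j \<le> b + Fb" unfolding vector_add_component mv_axis by linarith
    qed
    thus "\<exists>b. \<forall>q\<in>P. q $ i $ j \<le> b" by blast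
  qed
  hence ex: "\<exists>b. \<forall>q\<in>P. q $ i $ j \<le> b" for i j by blast
  have "\<forall>q\<in>P. q $ i $ j \<le> (SOME b. \<forall>q\<in>P. q $ i $ j \<le> b)" for i j
    using someI_ex[OF ex[of i j]] .
  thus ?thesis by (intro exI[of _ "\<lambda>i j. SOME b. \<forall>q\<in>P. q $ i $ j \<le> b"] ballI allI) blast
qed

lemma comp_bound: "\<exists>K. \<forall>q\<in>P. \<forall>i. \<bar>(q *v u + f q) $ i\<bar> \<le> K"
proof -
  obtain Fb where Fb: "\<forall>q\<in>P. supnorm (f q) \<le> Fb" using fbdd by (auto simp: bdd_above_def)
  obtain bnd where bnd: "\<forall>q\<in>P. \<forall>i j. q $ i $ j \<le> bnd i j" using entry_bound by blast
  define K where "K = (\<Sum>i\<in>UNIV. \<Sum>j\<in>UNIV. \<bar>bnd i j\<bar> * \<bar>u $ j - u $ i\<bar>) + Fb"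
  have "\<bar>(q *v u + f q) $ i\<bar> \<le> K" if q: "q \<in> P" for q i
  proof -
    have "\<bar>(q *v u) $ i\<bar> \<le> (\<Sum>j\<in>UNIV. \<bar>q $ i $ j * (u $ j - u $ i)\<bar>)"
      unfolding Qmv_eq[OF Q[rule_format, OF q]] by (rule sum_abs)
    also have "\<dots> \<le> (\<Sum>j\<in>UNIV. \<bar>bnd i j\<bar> * \<bar>u $ j - u $ i\<bar>)"
    proof (rule sum_mono)
      fix j
      show "\<bar>q $ i $ j * (u $ j - u $ i)\<bar> \<le> \<bar>bnd i j\<bar> * \<bar>u $ j - u $ i\<bar>"
      proof (cases "i = j")
        case False
        hence "0 \<le> q $ i $ j" using Q q by (auto simp: is_Q_matrix_def)
        moreover have "q $ i $ j \<le> bnd i j" using bnd q by blast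
        ultimately have "\<bar>q $ i $ j\<bar> \<le> \<bar>bnd i j\<bar>" by linarith
        thus ?thesis by (simp add: abs_mult mult_right_mono)
      qed simp
    qed
    also have "\<dots> \<le> (\<Sum>i\<in>UNIV. \<Sum>j\<in>UNIV. \<bar>bnd i j\<bar> * \<bar>u $ j - u $ i\<bar>)"
      by (rule member_le_sum[where f="\<lambda>i. \<Sum>j\<in>UNIV. \<bar>bnd i j\<bar> * \<bar>u $ j - u $ i\<bar>"])
        (auto intro: sum_nonneg)
    finally have 1: "\<bar>(q *v u) $ i\<bar> \<le> K - Fb" unfolding K_def by simp
    have "\<bar>f q $ i\<bar> \<le> Fb" using supnorm_ge[of "f q" i] Fb q by force
    thus ?thesis using 1 by simp
  qed
  thus ?thesis by blast
qed

definition "Cq u = (SUP q\<in>P. supnorm (q *v u + f q))"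

lemma Cq_bdd: "bdd_above ((\<lambda>q. supnorm (q *v u + f q)) ` P)"
proof -
  obtain K where "\<forall>q\<in>P. \<forall>i. \<bar>(q *v u + f q) $ i\<bar> \<le> K" using comp_bound by blast
  thus ?thesis by (intro bdd_aboveI[of _ K]) (auto intro: supnorm_le)
qed

lemma Cq_ge: "q \<in> P \<Longrightarrow> \<bar>(q *v u + f q) $ i\<bar> \<le> Cq u"
  unfolding Cq_def using supnorm_ge[of "q *v u + f q" i] cSUP_upper[OF _ Cq_bdd, of q u] by linarith

lemma Cq_nonneg: "0 \<le> Cq u"
  using Cq_ge[OF q0, of u undefined] by linarith


lemma Ssol_near: "q \<in> P \<Longrightarrow> 0 \<le> h \<Longrightarrow> \<bar>(Ssol q (f q) h u - u) $ i\<bar> \<le> h * Cq u"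
  using Ssol_diff_abs[OF Q[rule_format] _ order_refl, of q h u "f q" "Cq u" i] Cq_ge[of q u]
  by (simp add: Ssol_0)

lemma Eop_bdd: "0 \<le> h \<Longrightarrow> bdd_above ((\<lambda>q. Ssol q (f q) h u $ i) ` P)"
proof (rule bdd_aboveI[of _ "u $ i + h * Cq u"])
  fix x assume h: "0 \<le> h" and "x \<in> (\<lambda>q. Ssol q (f q) h u $ i) ` P"
  then obtain q where q: "q \<in> P" "x = Ssol q (f q) h u $ i" by blast
  have "\<bar>(Ssol q (f q) h u - u) $ i\<bar> \<le> h * Cq u" by (rule Ssol_near[OF q(1) h])
  thus "x \<le> u $ i + h * Cq u" using q(2) by (simp add: abs_le_iff)
qed

lemma P_ne: "P \<noteq> {}" using q0 by blast

lemma Eop_0: "Eop P f 0 u = u"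
proof -
  have "\<bar>Eop P f 0 u $ i - u $ i\<bar> \<le> 0" for i
    unfolding Eop_def vec_lambda_beta by (rule SUP_const_cmp[OF P_ne]) (simp add: Ssol_0)
  thus ?thesis by (simp add: vec_eq_iff)
qed

lemma Eop_nonexp:
  assumes "0 \<le> h" "\<forall>j. \<bar>(u - v) $ j\<bar> \<le> B"
  shows "\<bar>(Eop P f h u - Eop P f h v) $ i\<bar> \<le> B"
proof -
  have "\<bar>(SUP q\<in>P. Ssol q (f q) h u $ i) - (SUP q\<in>P. Ssol q (f q) h v $ i)\<bar> \<le> B"
  proof (rule SUP_abs_cmp[OF P_ne P_ne Eop_bdd[OF assms(1)] Eop_bdd[OF assms(1)]])
    have "\<bar>Ssol q (f q) h u $ i - Ssol q (f q) h v $ i\<bar> \<le> B" if "q \<in> P" for q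
      using Ssol_nonexp[OF Q[rule_format, OF that] assms, of "f q" i] by simp
    thus "\<forall>x\<in>P. \<exists>y\<in>P. \<bar>Ssol x (f x) h u $ i - Ssol y (f y) h v $ i\<bar> \<le> B"
      "\<forall>y\<in>P. \<exists>x\<in>P. \<bar>Ssol x (f x) h u $ i - Ssol y (f y) h v $ i\<bar> \<le> B" by blast+
  qed
  thus ?thesis by (simp add: Eop_def)
qed

lemma Eop_time:
  assumes "0 \<le> a" "0 \<le> b"
  shows "\<bar>(Eop P f a u - Eop P f b u) $ i\<bar> \<le> \<bar>a - b\<bar> * Cq u"
proof -
  have "\<bar>(SUP q\<in>P. Ssol q (f q) a u $ i) - (SUP q\<in>P. Ssol q (f q) b u $ i)\<bar> \<le> \<bar>a - b\<bar> * Cq u"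
  proof (rule SUP_abs_cmp[OF P_ne P_ne Eop_bdd[OF assms(1)] Eop_bdd[OF assms(2)]])
    have "\<bar>Ssol q (f q) a u $ i - Ssol q (f q) b u $ i\<bar> \<le> \<bar>a - b\<bar> * Cq u" if "q \<in> P" for q
      using Ssol_diff_abs[OF Q[rule_format, OF that] assms, of u "f q" "Cq u" i] Cq_ge[OF that, of u] by simp
    thus "\<forall>x\<in>P. \<exists>y\<in>P. \<bar>Ssol x (f x) a u $ i - Ssol y (f y) b u $ i\<bar> \<le> \<bar>a - b\<bar> * Cq u"
      "\<forall>y\<in>P. \<exists>x\<in>P. \<bar>Ssol x (f x) a u $ i - Ssol y (f y) b u $ i\<bar> \<le> \<bar>a - b\<bar> * Cq u" by blast+
  qed
  thus ?thesis by (simp add: Eop_def)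
qed

lemma F_nonexp:
  assumes "\<forall>h\<in>set hs. 0 \<le> h" "\<forall>j. \<bar>(u - v) $ j\<bar> \<le> B"
  shows "\<bar>(foldr (Eop P f) hs u - foldr (Eop P f) hs v) $ i\<bar> \<le> B"
  using assms(1)
proof (induction hs arbitrary: i)
  case Nil then show ?case using assms(2) by simp
next
  case (Cons h hs)
  then show ?case using Eop_nonexp[of h "foldr (Eop P f) hs u" "foldr (Eop P f) hs v" B i] by simp
qed

lemma F_near:
  assumes "\<forall>h\<in>set hs. 0 \<le> h"
  shows "\<bar>(foldr (Eop P f) hs u - u) $ i\<bar> \<le> sum_list hs * Cq u"
  using assms
proof (induction hs arbitrary: i)
  case Nil then show ?case by simp
next
  case (Cons h hs)
  have h: "0 \<le> h" using Cons by simp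
  have 1: "\<bar>(Eop P f h (foldr (Eop P f) hs u) - Eop P f h u) $ i\<bar> \<le> sum_list hs * Cq u"
    by (rule Eop_nonexp[OF h]) (use Cons in simp)
  have 2: "\<bar>(Eop P f h u - u) $ i\<bar> \<le> h * Cq u"
    using Eop_time[OF h order_refl, of u i] h by (simp add: Eop_0)
  show ?case using 1 2 by (simp add: algebra_simps)
qed

lemma F_shrink:
  assumes "\<forall>h\<in>set hs. 0 < h" "0 \<le> s" "s \<le> sum_list hs"
  shows "\<exists>hs'. (\<forall>h\<in>set hs'. 0 < h) \<and> sum_list hs' = s \<and>
     (\<forall>i. \<bar>(foldr (Eop P f) hs u - foldr (Eop P f) hs' u) $ i\<bar> \<le> (sum_list hs - s) * Cq u)"
  using assms
proof (induction hs arbitrary: s)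
  case Nil then show ?case by (intro exI[of _ "[]"]) simp
next
  case (Cons h hs)
  have h: "0 < h" and hs: "\<forall>h\<in>set hs. 0 < h" using Cons.prems by auto
  hence hs0: "\<forall>h\<in>set hs. 0 \<le> h" by auto
  let ?r = "sum_list hs"
  let ?w = "foldr (Eop P f) hs u"
  have near: "\<forall>j. \<bar>(?w - u) $ j\<bar> \<le> ?r * Cq u" using F_near[OF hs0] by blast
  show ?case
  proof (cases "s \<le> h")
    case True
    show ?thesis
    proof (cases "s = 0")
      case True
      show ?thesis
      proof (intro exI[of _ "[]"] conjI allI)
        fix i
        show "\<bar>(foldr (Eop P f) (h # hs) u - foldr (Eop P f) [] u) $ i\<bar> \<le> (sum_list (h # hs) - s) * Cq u"
          using F_near[of "h # hs" u i] h hs0 True by simp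
      qed (use True in simp_all)
    next
      case False
      hence s: "0 < s" using Cons.prems by simp
      show ?thesis
      proof (intro exI[of _ "[s]"] conjI allI)
        fix i
        have 1: "\<bar>(Eop P f h ?w - Eop P f h u) $ i\<bar> \<le> ?r * Cq u"
          by (rule Eop_nonexp[OF less_imp_le[OF h] near])
        have 2: "\<bar>(Eop P f h u - Eop P f s u) $ i\<bar> \<le> (h - s) * Cq u"
          using Eop_time[OF less_imp_le[OF h] less_imp_le[OF s], of u i] \<open>s \<le> h\<close> by simp
        show "\<bar>(foldr (Eop P f) (h # hs) u - foldr (Eop P f) [s] u) $ i\<bar> \<le> (sum_list (h # hs) - s) * Cq u"
          using 1 2 by (simp add: algebra_simps)
      qed (use s in simp_all)
    qed
  next
    case False
    then obtain hs'' where hs'': "\<forall>h\<in>set hs''. 0 < h" "sum_list hs'' = s - h"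
      "\<forall>i. \<bar>(?w - foldr (Eop P f) hs'' u) $ i\<bar> \<le> (?r - (s - h)) * Cq u"
      using Cons.IH[OF hs, of "s - h"] Cons.prems by auto
    show ?thesis
    proof (intro exI[of _ "h # hs''"] conjI allI)
      fix i
      show "\<bar>(foldr (Eop P f) (h # hs) u - foldr (Eop P f) (h # hs'') u) $ i\<bar> \<le> (sum_list (h # hs) - s) * Cq u"
        using Eop_nonexp[OF less_imp_le[OF h] hs''(3), of i] by (simp add: algebra_simps)
    qed (use hs'' h in auto)
  qed
qed

lemma F_change:
  assumes "\<forall>h\<in>set hs. 0 < h" "0 \<le> s"
  shows "\<exists>hs'. (\<forall>h\<in>set hs'. 0 < h) \<and> sum_list hs' = s \<and>
     (\<forall>i. \<bar>(foldr (Eop P f) hs u - foldr (Eop P f) hs' u) $ i\<bar> \<le> \<bar>sum_list hs - s\<bar> * Cq u)"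
proof (cases "s \<le> sum_list hs")
  case True
  then show ?thesis using F_shrink[OF assms True, of u] by auto
next
  case False
  let ?c = "s - sum_list hs"
  have c: "0 < ?c" using False by simp
  show ?thesis
  proof (intro exI[of _ "hs @ [?c]"] conjI allI)
    fix i
    have "\<forall>j. \<bar>(u - Eop P f ?c u) $ j\<bar> \<le> ?c * Cq u"
      using Eop_time[OF less_imp_le[OF c] order_refl, of u] c by (simp add: Eop_0 abs_minus_commute)
    from F_nonexp[OF _ this, of hs i] assms(1)
    show "\<bar>(foldr (Eop P f) hs u - foldr (Eop P f) (hs @ [?c]) u) $ i\<bar> \<le> \<bar>sum_list hs - s\<bar> * Cq u"
      using False by (simp add: less_imp_le)
  qed (use assms c in auto)
qed

end


definition incs :: "real list \<Rightarrow> real list" where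
  "incs xs = map (\<lambda>(a,b). b - a) (zip xs (tl xs))"

lemma incs_simps[simp]: "incs [] = []" "incs [x] = []" "incs (x # y # zs) = (y - x) # incs (y # zs)"
  by (simp_all add: incs_def)

lemma increments_incs: "increments \<pi> = incs (sorted_list_of_set \<pi>)"
  by (simp add: increments_def incs_def Let_def)

lemma incs_sum: "sorted_wrt (<) (x # ys) \<Longrightarrow> sum_list (incs (x # ys)) = Max (set (x # ys)) - x"
proof (induction ys arbitrary: x)
  case Nil then show ?case by simp
next
  case (Cons y zs)
  have xy: "x < y" using Cons.prems by simp
  have IH: "sum_list (incs (y # zs)) = Max (set (y # zs)) - y" using Cons by simp
  have m: "y \<le> Max (set (y # zs))" by simp
  have "x \<le> Max (set (y # zs))" using xy m by linarith
  hence "Max (set (x # y # zs)) = Max (set (y # zs))"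
    by (simp add: max_def del: Max_ge_iff)
  thus ?case using IH by simp
qed

lemma incs_pos: "sorted_wrt (<) xs \<Longrightarrow> \<forall>h\<in>set (incs xs). 0 < h"
  by (induction xs rule: induct_list012) auto

fun psums :: "real \<Rightarrow> real list \<Rightarrow> real list" where
  "psums a [] = [a]"
| "psums a (h # hs) = a # psums (a + h) hs"

lemma psums_hd: "\<exists>r. psums a hs = a # r"
  by (cases hs) auto

lemma psums_ge: "\<forall>h\<in>set hs. 0 \<le> h \<Longrightarrow> y \<in> set (psums a hs) \<Longrightarrow> a \<le> y"
proof (induction hs arbitrary: a)
  case Nil then show ?case by simp
next
  case (Cons h hs)
  show ?case
  proof (cases "y = a")
    case False
    hence "y \<in> set (psums (a + h) hs)" using Cons.prems by simp
    hence "a + h \<le> y" using Cons.IH[of "a + h"] Cons.prems by simp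
    thus ?thesis using Cons.prems by simp
  qed simp
qed

lemma psums_sorted: "\<forall>h\<in>set hs. 0 < h \<Longrightarrow> sorted_wrt (<) (psums a hs)"
proof (induction hs arbitrary: a)
  case Nil then show ?case by simp
next
  case (Cons h hs)
  have nn: "\<forall>h\<in>set hs. 0 \<le> h" using Cons.prems by auto
  have "\<forall>y\<in>set (psums (a + h) hs). a < y"
  proof
    fix y assume "y \<in> set (psums (a + h) hs)"
    hence "a + h \<le> y" by (rule psums_ge[OF nn])
    thus "a < y" using Cons.prems by simp
  qed
  then show ?case using Cons by simp
qed

lemma psums_incs: "incs (psums a hs) = hs"
proof (induction hs arbitrary: a)
  case Nil then show ?case by simp
next
  case (Cons h hs)
  obtain r where r: "psums (a + h) hs = (a + h) # r" using psums_hd by blast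
  have "incs (psums a (h # hs)) = h # incs (psums (a + h) hs)" by (simp add: r)
  then show ?case using Cons by simp
qed

lemma psums_max: "\<forall>h\<in>set hs. 0 < h \<Longrightarrow> Max (set (psums a hs)) = a + sum_list hs"
proof (induction hs arbitrary: a)
  case Nil then show ?case by simp
next
  case (Cons h hs)
  have IH: "Max (set (psums (a + h) hs)) = a + h + sum_list hs" using Cons by simp
  have "0 \<le> sum_list hs" by (rule sum_list_nonneg) (use Cons.prems in auto)
  moreover have "Max (set (psums a (h # hs))) = max a (Max (set (psums (a + h) hs)))"
    using psums_hd[of "a + h" hs] by (auto simp: Max_insert)
  ultimately show ?case using IH Cons.prems by simp
qed

lemma part_to_list:
  assumes "\<pi> \<in> partitions t"
  shows "(\<forall>h\<in>set (increments \<pi>). 0 < h) \<and> sum_list (increments \<pi>) = t"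
proof -
  have fin: "finite \<pi>" and sub: "\<pi> \<subseteq> {0..}" and z: "0 \<in> \<pi>" and mx: "Max \<pi> = t"
    using assms by (auto simp: partitions_def)
  let ?xs = "sorted_list_of_set \<pi>"
  have ss: "sorted_wrt (<) ?xs" by simp
  have mn: "Min \<pi> = 0" using fin sub z by (intro Min_eqI) auto
  have xs: "?xs = 0 # sorted_list_of_set (\<pi> - {0})"
    using sorted_list_of_set_nonempty[OF fin] z mn by auto
  have "sum_list (incs ?xs) = Max (set ?xs) - 0"
    using incs_sum[of 0 "sorted_list_of_set (\<pi> - {0})"] ss xs by simp
  also have "set ?xs = \<pi>" using fin by simp
  finally show ?thesis using incs_pos[OF ss] mx by (simp add: increments_incs)
qed

lemma list_to_part:
  assumes "\<forall>h\<in>set hs. 0 < h" "sum_list hs = s"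
  shows "set (psums 0 hs) \<in> partitions s \<and> increments (set (psums 0 hs)) = hs"
proof -
  have ss: "sorted_wrt (<) (psums 0 hs)" by (rule psums_sorted[OF assms(1)])
  have sl: "sorted_list_of_set (set (psums 0 hs)) = psums 0 hs"
    using ss by (simp add: sorted_list_of_set_sort_remdups strict_sorted_iff distinct_remdups_id sorted_sort_id)
  have nn: "\<forall>h\<in>set hs. 0 \<le> h" using assms(1) by auto
  have "set (psums 0 hs) \<subseteq> {0..}" using psums_ge[OF nn, of _ 0] by auto
  moreover have "0 \<in> set (psums 0 hs)" using psums_hd[of 0 hs] by force
  moreover have "Max (set (psums 0 hs)) = s" using psums_max[OF assms(1)] assms(2) by simp
  ultimately show ?thesis
    by (simp add: partitions_def increments_incs sl psums_incs)
qed

context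
  fixes P :: "(real^'n::finite^'n) set" and f :: "real^'n^'n \<Rightarrow> real^'n" and q0
  assumes Q: "\<forall>q\<in>P. is_Q_matrix q"
    and q0: "q0 \<in> P"
    and Qfin: "\<forall>u i. bdd_above ((\<lambda>q. (q *v u + f q) $ i) ` P)"
    and fbdd: "bdd_above ((\<lambda>q. supnorm (f q)) ` P)"
begin

lemma Epart_F: "Epart P f \<pi> u = foldr (Eop P f) (increments \<pi>) u"
  unfolding Epart_def using Eop_0[OF Q q0 Qfin fbdd] by simp

lemma partitions_ne: "0 \<le> t \<Longrightarrow> partitions t \<noteq> {}"
  using list_to_part[of "if t = 0 then [] else [t]" t] by (cases "t = 0") auto

lemma Epart_near:
  assumes "\<pi> \<in> partitions t"
  shows "\<bar>Epart P f \<pi> u $ i - u $ i\<bar> \<le> t * Cq P f u"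
  using F_near[OF Q q0 Qfin fbdd, of "increments \<pi>" u i] part_to_list[OF assms]
  by (simp add: Epart_F less_imp_le)

lemma part_bdd: "bdd_above ((\<lambda>\<pi>. Epart P f \<pi> u $ i) ` partitions t)"
proof (rule bdd_aboveI[of _ "u $ i + t * Cq P f u"])
  fix x assume "x \<in> (\<lambda>\<pi>. Epart P f \<pi> u $ i) ` partitions t"
  then obtain \<pi> where p: "\<pi> \<in> partitions t" "x = Epart P f \<pi> u $ i" by blast
  show "x \<le> u $ i + t * Cq P f u" using Epart_near[OF p(1), of u i] p(2) by (simp add: abs_le_iff)
qed

lemma Epart_match:
  assumes "\<pi> \<in> partitions t" "0 \<le> s"
  shows "\<exists>\<pi>'\<in>partitions s. \<bar>Epart P f \<pi> u $ i - Epart P f \<pi>' u $ i\<bar> \<le> \<bar>t - s\<bar> * Cq P f u"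
proof -
  have pt: "\<forall>h\<in>set (increments \<pi>). 0 < h" "sum_list (increments \<pi>) = t"
    using part_to_list[OF assms(1)] by auto
  obtain hs' where hs': "\<forall>h\<in>set hs'. 0 < h" "sum_list hs' = s"
    "\<forall>i. \<bar>(foldr (Eop P f) (increments \<pi>) u - foldr (Eop P f) hs' u) $ i\<bar> \<le> \<bar>t - s\<bar> * Cq P f u"
    using F_change[OF Q q0 Qfin fbdd pt(1) assms(2), of u] pt(2) by auto
  have lp: "set (psums 0 hs') \<in> partitions s \<and> increments (set (psums 0 hs')) = hs'"
    by (rule list_to_part[OF hs'(1,2)])
  show ?thesis
    by (rule bexI[of _ "set (psums 0 hs')"]) (use lp hs'(3) in \<open>simp_all add: Epart_F\<close>)
qed

lemma nisio_near: "0 \<le> t \<Longrightarrow> \<bar>(nisio P f t u - u) $ i\<bar> \<le> t * Cq P f u"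
  unfolding nisio_def by (simp, rule SUP_const_cmp[OF partitions_ne]) (auto intro: Epart_near)

lemma nisio_diff:
  assumes "0 \<le> s" "0 \<le> t"
  shows "\<bar>(nisio P f t u - nisio P f s u) $ i\<bar> \<le> \<bar>t - s\<bar> * Cq P f u"
proof -
  have "\<bar>(SUP \<pi>\<in>partitions t. Epart P f \<pi> u $ i) - (SUP \<pi>\<in>partitions s. Epart P f \<pi> u $ i)\<bar> \<le> \<bar>t - s\<bar> * Cq P f u"
  proof (rule SUP_abs_cmp[OF partitions_ne[OF assms(2)] partitions_ne[OF assms(1)] part_bdd part_bdd])
    show "\<forall>x\<in>partitions t. \<exists>y\<in>partitions s. \<bar>Epart P f x u $ i - Epart P f y u $ i\<bar> \<le> \<bar>t - s\<bar> * Cq P f u"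
      using Epart_match[OF _ assms(1)] by blast
    show "\<forall>y\<in>partitions s. \<exists>x\<in>partitions t. \<bar>Epart P f x u $ i - Epart P f y u $ i\<bar> \<le> \<bar>t - s\<bar> * Cq P f u"
      using Epart_match[OF _ assms(2)] by (metis abs_minus_commute)
  qed
  thus ?thesis by (simp add: nisio_def)
qed

end

theorem mainTheorem4:
  fixes P :: "(real^'n^'n) set" and f :: "real^'n^'n \<Rightarrow> real^'n" and q0 :: "real^'n^'n"
  assumes Q: "\<forall>q\<in>P. is_Q_matrix q"
    and q0: "q0 \<in> P" "f q0 = 0"
    and fle: "\<forall>q\<in>P. \<forall>i. f q $ i \<le> 0"
    and Qfin: "\<forall>u i. bdd_above ((\<lambda>q. (q *v u + f q) $ i) ` P)"
    and fbdd: "bdd_above ((\<lambda>q. supnorm (f q)) ` P)"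
  shows "(\<forall>t u0. t \<ge> 0 \<longrightarrow>
            supnorm (nisio P f t u0 - u0) \<le> t * (SUP q\<in>P. supnorm (q *v u0 + f q)))
       \<and> (\<forall>s t u0. s \<ge> 0 \<longrightarrow> t \<ge> 0 \<longrightarrow>
            supnorm (nisio P f t u0 - nisio P f s u0) \<le> \<bar>t - s\<bar> * (SUP q\<in>P. supnorm (q *v u0 + f q)))
       \<and> (\<forall>u0. \<exists>L. L-lipschitz_on {0..} (\<lambda>t. nisio P f t u0))"
proof (intro conjI allI impI)
  note C = Cq_def[OF Q q0(1) Qfin fbdd]
  fix t u0 :: "real^'n" and tt :: real
  show "0 \<le> tt \<Longrightarrow> supnorm (nisio P f tt u0 - u0) \<le> tt * (SUP q\<in>P. supnorm (q *v u0 + f q))"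
    using nisio_near[OF Q q0(1) Qfin fbdd] by (intro supnorm_le) (simp add: C)
next
  note C = Cq_def[OF Q q0(1) Qfin fbdd]
  fix s t :: real and u0
  assume "0 \<le> s" "0 \<le> t"
  thus "supnorm (nisio P f t u0 - nisio P f s u0) \<le> \<bar>t - s\<bar> * (SUP q\<in>P. supnorm (q *v u0 + f q))"
    using nisio_diff[OF Q q0(1) Qfin fbdd] by (intro supnorm_le) (simp add: C)
next
  fix u0 :: "real^'n"
  let ?C = "Cq P f u0"
  have C0: "0 \<le> ?C" by (rule Cq_nonneg[OF Q q0(1) Qfin fbdd])
  show "\<exists>L. L-lipschitz_on {0..} (\<lambda>t. nisio P f t u0)"
  proof (intro exI lipschitz_onI)
    show "0 \<le> real CARD('n) * ?C" using C0 by simp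
    fix x y :: real assume "x \<in> {0..}" "y \<in> {0..}"
    hence xy: "0 \<le> x" "0 \<le> y" by auto
    have "dist (nisio P f x u0) (nisio P f y u0) \<le> (\<Sum>i\<in>UNIV. \<bar>(nisio P f x u0 - nisio P f y u0) $ i\<bar>)"
      unfolding dist_norm by (rule norm_le_l1_cart)
    also have "\<dots> \<le> (\<Sum>i\<in>(UNIV::'n set). \<bar>x - y\<bar> * ?C)"
      by (rule sum_mono) (rule nisio_diff[OF Q q0(1) Qfin fbdd xy(2,1)])
    also have "\<dots> = real CARD('n) * ?C * dist x y" by (simp add: dist_real_def)
    finally show "dist (nisio P f x u0) (nisio P f y u0) \<le> real CARD('n) * ?C * dist x y" .
  qed
qed

end
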